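(* For each integer $\omega$, there is a proof labeling scheme $(\mathsf{P},\mathsf{V})$ of size $O(\log n)$ for the class of graphs of locally verifiable treewidth at most $\omega$.
   Context: An elimination tree of a connected graph $G$ is a rooted tree $F$ with $V(F)=V(G)$ such that for every edge $uv$ of $G$, one of $u,v$ is an ancestor of the other in $F$. For $v\in V(F)$ let $F_v$ be the subtree rooted at $v$ and $\mathsf{str}(v)$ the set consisting of $v$ and all strict ancestors of $v$ having a neighbour in $V(F_v)$; the width of $F$ is $\max_v|\mathsf{str}(v)|-1$. An oriented path system $\mathcal{P}$ over $G$ is a set of oriented paths, each obtained by orienting the edges of a path of $G$. The congestion of a vertex $v$ in $\mathcal{P}$ is the number of paths of $\mathcal{P}$ having $v$ as starting vertex or internal vertex (paths ending at $v$ are not counted); the congestion of $\mathcal{P}$ is the maximum over all vertices. $\mathcal{P}$ witnesses an elimination tree $F$ if for every vertex $v$ with parent $\mathsf{p}(v)$ in $F$, either $v\mathsf{p}(v)\in E(G)$ or $\mathcal{P}$ contains a path oriented from $v$ to $\mathsf{p}(v)$. A graph has locally verifiable treewidth at most $k$ if each connected component admits an elimination tree $F$ of width at most $k$ and an oriented path system of congestion at most $k$ witnessing $F$. Proof labeling scheme: vertices have unique identifiers in $\{1,\dots,n\}$; a prover assigns binary labels; the verifier at $v$ sees only $\mathsf{id}(v)$ and $(\mathsf{id}(w),\varphi(w))$ for $w\in N[v]$ and outputs Yes/No; completeness: on graphs of the class, the prover's labels make all vertices output Yes; soundness: on graphs outside the class, every labeling makes some vertex output No; size $O(\log n)$: all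 labels have length $O(\log n)$. *)

theory Defs
  imports Complex_Main
begin

text \<open>A finite simple graph whose vertices are identified with their identifiers
  1..n.  E is the (symmetric, irreflexive) adjacency relation.\<close>
definition graph :: "nat \<Rightarrow> (nat \<Rightarrow> nat \<Rightarrow> bool) \<Rightarrow> bool" where
  "graph n E \<longleftrightarrow> (\<forall>u v. E u v \<longrightarrow> u \<in> {1..n} \<and> v \<in> {1..n} \<and> E v u \<and> u \<noteq> v)"

definition component :: "nat \<Rightarrow> (nat \<Rightarrow> nat \<Rightarrow> bool) \<Rightarrow> nat \<Rightarrow> nat set" where
  "component n E x = {y \<in> {1..n}. (x, y) \<in> {(u, v). E u v}\<^sup>*}"

definition par_rel :: "nat set \<Rightarrow> (nat \<Rightarrow> nat option) \<Rightarrow> (nat \<times> nat) set" where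
  "par_rel C par = {(v, u). v \<in> C \<and> par v = Some u}"

definition rooted_tree :: "nat set \<Rightarrow> (nat \<Rightarrow> nat option) \<Rightarrow> nat \<Rightarrow> bool" where
  "rooted_tree C par r \<longleftrightarrow> r \<in> C \<and> par r = None \<and>
     (\<forall>v \<in> C - {r}. \<exists>u \<in> C. par v = Some u) \<and>
     (\<forall>v \<in> C. (v, r) \<in> (par_rel C par)\<^sup>*)"

definition anc :: "nat set \<Rightarrow> (nat \<Rightarrow> nat option) \<Rightarrow> nat \<Rightarrow> nat \<Rightarrow> bool" where
  "anc C par u v \<longleftrightarrow> (v, u) \<in> (par_rel C par)\<^sup>+"

definition elimination_tree :: "(nat \<Rightarrow> nat \<Rightarrow> bool) \<Rightarrow> nat set \<Rightarrow> (nat \<Rightarrow> nat option) \<Rightarrow> nat \<Rightarrow> bool" where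
  "elimination_tree E C par r \<longleftrightarrow> rooted_tree C par r \<and>
     (\<forall>u \<in> C. \<forall>v \<in> C. E u v \<longrightarrow> anc C par u v \<or> anc C par v u)"

definition subtree :: "nat set \<Rightarrow> (nat \<Rightarrow> nat option) \<Rightarrow> nat \<Rightarrow> nat set" where
  "subtree C par v = {w \<in> C. w = v \<or> anc C par v w}"

definition str :: "(nat \<Rightarrow> nat \<Rightarrow> bool) \<Rightarrow> nat set \<Rightarrow> (nat \<Rightarrow> nat option) \<Rightarrow> nat \<Rightarrow> nat set" where
  "str E C par v = {v} \<union> {u. anc C par u v \<and> (\<exists>w \<in> subtree C par v. E u w)}"

definition width_le :: "(nat \<Rightarrow> nat \<Rightarrow> bool) \<Rightarrow> nat set \<Rightarrow> (nat \<Rightarrow> nat option) \<Rightarrow> int \<Rightarrow> bool" where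
  "width_le E C par k \<longleftrightarrow> (\<forall>v \<in> C. int (card (str E C par v)) - 1 \<le> k)"

definition oriented_path :: "(nat \<Rightarrow> nat \<Rightarrow> bool) \<Rightarrow> nat set \<Rightarrow> nat list \<Rightarrow> bool" where
  "oriented_path E C p \<longleftrightarrow> p \<noteq> [] \<and> distinct p \<and> set p \<subseteq> C \<and>
     (\<forall>i. Suc i < length p \<longrightarrow> E (p ! i) (p ! Suc i))"

definition path_system :: "(nat \<Rightarrow> nat \<Rightarrow> bool) \<Rightarrow> nat set \<Rightarrow> nat list set \<Rightarrow> bool" where
  "path_system E C PS \<longleftrightarrow> (\<forall>p \<in> PS. oriented_path E C p)"

text \<open>congestion of v: number of paths having v as starting or internal vertex\<close>
definition congestion_at :: "nat list set \<Rightarrow> nat \<Rightarrow> nat" where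
  "congestion_at PS v = card {p \<in> PS. v \<in> set (butlast p)}"

definition congestion_le :: "nat set \<Rightarrow> nat list set \<Rightarrow> int \<Rightarrow> bool" where
  "congestion_le C PS k \<longleftrightarrow> (\<forall>v \<in> C. int (congestion_at PS v) \<le> k)"

definition witnesses :: "(nat \<Rightarrow> nat \<Rightarrow> bool) \<Rightarrow> nat set \<Rightarrow> nat list set \<Rightarrow> (nat \<Rightarrow> nat option) \<Rightarrow> bool" where
  "witnesses E C PS par \<longleftrightarrow> (\<forall>v \<in> C. \<forall>u. par v = Some u \<longrightarrow>
      E v u \<or> (\<exists>p \<in> PS. hd p = v \<and> last p = u))"

definition lv_treewidth_le :: "int \<Rightarrow> nat \<Rightarrow> (nat \<Rightarrow> nat \<Rightarrow> bool) \<Rightarrow> bool" where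
  "lv_treewidth_le k n E \<longleftrightarrow> (\<forall>x \<in> {1..n}. let C = component n E x in
     \<exists>par r PS. elimination_tree E C par r \<and> width_le E C par k \<and>
        path_system E C PS \<and> congestion_le C PS k \<and> witnesses E C PS par)"

definition local_view :: "(nat \<Rightarrow> nat \<Rightarrow> bool) \<Rightarrow> (nat \<Rightarrow> bool list) \<Rightarrow> nat \<Rightarrow> (nat \<times> bool list) set" where
  "local_view E \<phi> v = {(w, \<phi> w) | w. w = v \<or> E v w}"

definition proof_labeling_scheme ::
  "(nat \<Rightarrow> (nat \<Rightarrow> nat \<Rightarrow> bool) \<Rightarrow> bool) \<Rightarrow>
   (nat \<Rightarrow> (nat \<Rightarrow> nat \<Rightarrow> bool) \<Rightarrow> nat \<Rightarrow> bool list) \<Rightarrow>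
   (nat \<Rightarrow> (nat \<times> bool list) set \<Rightarrow> bool) \<Rightarrow> bool" where
  "proof_labeling_scheme cls P V \<longleftrightarrow>
     (\<forall>n E. graph n E \<and> cls n E \<longrightarrow> (\<forall>v \<in> {1..n}. V v (local_view E (P n E) v))) \<and>
     (\<forall>n E. graph n E \<and> \<not> cls n E \<longrightarrow> (\<forall>\<phi>. \<exists>v \<in> {1..n}. \<not> V v (local_view E \<phi> v)))"

text \<open>Labels of size O(log n) (written c * (log n + 1) to cover n = 1).\<close>
definition log_size :: "(nat \<Rightarrow> (nat \<Rightarrow> nat \<Rightarrow> bool) \<Rightarrow> bool) \<Rightarrow>
   (nat \<Rightarrow> (nat \<Rightarrow> nat \<Rightarrow> bool) \<Rightarrow> nat \<Rightarrow> bool list) \<Rightarrow> bool" where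
  "log_size cls P \<longleftrightarrow> (\<exists>c::real. \<forall>n E. graph n E \<and> cls n E \<longrightarrow>
     (\<forall>v \<in> {1..n}. real (length (P n E v)) \<le> c * (log 2 (real n) + 1)))"

end

theory Submission
  imports Defs "HOL-Library.Nat_Bijection" "HOL-Library.Transitive_Closure_Table"
begin

fun bin :: "nat \<Rightarrow> bool list" where
  "bin m = (if m = 0 then [] else odd m # bin (m div 2))"

declare bin.simps[simp del]

lemma bin_inj: "bin a = bin b \<Longrightarrow> a = b"
proof (induction a arbitrary: b rule: bin.induct)
  case (1 a)
  show ?case
  proof (cases "a = 0")
    case True
    then show ?thesis using 1(2) by (metis bin.simps list.distinct(1))
  next
    case False
    then have b0: "b \<noteq> 0" using 1(2) by (metis bin.simps list.distinct(1))
    have "odd a = odd b" "bin (a div 2) = bin (b div 2)"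
      using 1(2) False b0 by (subst (asm) (1 2) bin.simps; simp)+
    then have "a div 2 = b div 2" using 1(1) False by blast
    then show ?thesis using \<open>odd a = odd b\<close>
      by (metis div_mult_mod_eq odd_iff_mod_2_eq_one mod2_eq_if)
  qed
qed

lemma bin_len_pos: "0 < m \<Longrightarrow> 2 ^ length (bin m) \<le> 2 * m"
proof (induction m rule: bin.induct)
  case (1 m)
  have L: "length (bin m) = Suc (length (bin (m div 2)))" using 1(2) by (simp add: bin.simps)
  show ?case
  proof (cases "m div 2 = 0")
    case True
    then have "bin (m div 2) = []" by (simp add: bin.simps)
    then show ?thesis using L 1(2) by simp
  next
    case False
    then have "2 ^ length (bin (m div 2)) \<le> 2 * (m div 2)" using 1 by simp
    then show ?thesis using L by simp
  qed
qed

lemma bin_len: "2 ^ length (bin m) \<le> 2 * m + 1"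
  using bin_len_pos[of m] by (cases "m = 0") (auto simp: bin.simps)

lemma bin_len_log: "m \<le> B \<Longrightarrow> 1 \<le> B \<Longrightarrow> real (length (bin m)) \<le> log 2 (real B) + 2"
proof -
  assume mB: "m \<le> B" and B1: "1 \<le> B"
  have "(2::real) ^ length (bin m) \<le> real (2 * m + 1)"
    using bin_len[of m] by (metis numeral_power_le_of_nat_cancel_iff of_nat_numeral)
  also have "\<dots> \<le> 4 * real B" using mB B1 by simp
  finally have h: "(2::real) ^ length (bin m) \<le> 4 * real B" .
  have "real (length (bin m)) = log 2 ((2::real) ^ length (bin m))" by (simp add: log_nat_power)
  also have "\<dots> \<le> log 2 (4 * real B)" using h B1 by (subst log_le_cancel_iff) auto
  also have "\<dots> = log 2 4 + log 2 (real B)" using B1 by (subst log_mult) auto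
  also have "log 2 (4::real) = 2"
  proof -
    have "log 2 ((2::real) ^ 2) = real 2 * log 2 2" by (rule log_nat_power) simp
    moreover have "(2::real) ^ 2 = 4" by simp
    ultimately show ?thesis by simp
  qed
  finally show ?thesis by simp
qed

lemma step_bound: "2 \<le> (K::nat) \<Longrightarrow> 2 * K * K + 2 * K + 1 \<le> K ^ 4"
proof -
  assume K: "2 \<le> K"
  have a1: "K * 2 \<le> K * K" using K by (rule mult_le_mono2)
  have b: "2 * 2 \<le> K * K" using mult_le_mono[OF K K] .
  have b2: "4 * (K * K) \<le> (K * K) * (K * K)" using b by (intro mult_le_mono1) simp
  have e1: "2 * K * K = 2 * (K * K)" by simp
  have e2: "K ^ 4 = (K * K) * (K * K)" by (simp add: power4_eq_xxxx)
  have c: "2 * (K * K) + 2 * K + 1 \<le> 4 * (K * K)" using a1 K by linarith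
  have "2 * (K * K) + 2 * K + 1 \<le> (K * K) * (K * K)" using c b2 by linarith
  then show ?thesis by (simp only: e1 e2)
qed

lemma list_encode_bound:
  assumes "2 \<le> M" "\<forall>x\<in>set xs. x \<le> M"
  shows "list_encode xs \<le> M ^ (4 ^ length xs)"
  using assms(2)
proof (induction xs)
  case Nil then show ?case by simp
next
  case (Cons x xs)
  let ?K = "M ^ (4 ^ length xs)"
  have MK: "M \<le> ?K" using assms(1) by (intro self_le_power) auto
  have K2: "2 \<le> ?K" using assms(1) MK by linarith
  have xK: "x \<le> ?K" using Cons.prems MK by auto
  have eK: "list_encode xs \<le> ?K" using Cons by simp
  have t: "triangle (x + list_encode xs) \<le> triangle (2 * ?K)"
    unfolding triangle_def using xK eK by (intro div_le_mono mult_le_mono) auto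
  have "list_encode (x # xs) = Suc (triangle (x + list_encode xs) + x)"
    by (simp add: prod_encode_def)
  also have "\<dots> \<le> Suc (triangle (2 * ?K) + ?K)" using t xK by simp
  also have "triangle (2 * ?K) = ?K * (2 * ?K + 1)" unfolding triangle_def by simp
  also have "Suc (?K * (2 * ?K + 1) + ?K) = 2 * ?K * ?K + 2 * ?K + 1" by (simp add: algebra_simps)
  also have "\<dots> \<le> ?K ^ 4" using step_bound[OF K2] .
  also have "\<dots> = M ^ (4 ^ length (x # xs))" by (simp add: power_mult[symmetric] mult.commute)
  finally show ?case .
qed


type_synonym core = "nat \<times> nat \<times> nat \<times> nat \<times> nat list"
type_synonym lab = "core \<times> (core \<times> nat) list"

definition cid :: "core \<Rightarrow> nat" where "cid c = fst c"
definition crt :: "core \<Rightarrow> nat" where "crt c = fst (snd c)"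
definition cd :: "core \<Rightarrow> nat" where "cd c = fst (snd (snd c))"
definition cp :: "core \<Rightarrow> nat" where "cp c = fst (snd (snd (snd c)))"
definition cS :: "core \<Rightarrow> nat list" where "cS c = snd (snd (snd (snd c)))"

lemma core_sel[simp]: "cid (a,b,c,d,e) = a" "crt (a,b,c,d,e) = b" "cd (a,b,c,d,e) = c"
  "cp (a,b,c,d,e) = d" "cS (a,b,c,d,e) = e"
  by (simp_all add: cid_def crt_def cd_def cp_def cS_def)

definition pok :: "core \<Rightarrow> core \<Rightarrow> bool" where
  "pok c c' \<longleftrightarrow> cid c' = cp c \<and> crt c' = crt c \<and> cd c' < cd c \<and> set (cS c) - {cid c} \<subseteq> set (cS c')"

definition check :: "int \<Rightarrow> nat \<Rightarrow> nat set \<Rightarrow> (nat \<Rightarrow> lab) \<Rightarrow> bool" where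
  "check \<omega> v N L \<longleftrightarrow>
    cid (fst (L v)) = v \<and> v \<in> set (cS (fst (L v))) \<and> int (length (cS (fst (L v)))) \<le> \<omega> + 1 \<and>
    (cp (fst (L v)) = 0 \<longrightarrow> crt (fst (L v)) = v \<and> set (cS (fst (L v))) \<subseteq> {v}) \<and>
    (cp (fst (L v)) \<noteq> 0 \<longrightarrow> (cp (fst (L v)) \<in> N \<and> pok (fst (L v)) (fst (L (cp (fst (L v))))))
        \<or> (\<exists>k. (fst (L v), k) \<in> set (snd (L v)))) \<and>
    (\<forall>u\<in>N. crt (fst (L u)) = crt (fst (L v)) \<and> (u \<in> set (cS (fst (L v))) \<or> v \<in> set (cS (fst (L u))))) \<and>
    int (length (snd (L v))) \<le> \<omega> \<and>
    (\<forall>c k. (c, k) \<in> set (snd (L v)) \<longrightarrow>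
       (\<exists>y\<in>N. (k = 1 \<and> y = cp c \<and> pok c (fst (L y))) \<or> (1 < k \<and> (c, k - 1) \<in> set (snd (L y)))))"

lemma checkD:
  assumes "check \<omega> v N L"
  shows chk_id: "cid (fst (L v)) = v"
  and chk_in: "v \<in> set (cS (fst (L v)))"
  and chk_len: "int (length (cS (fst (L v)))) \<le> \<omega> + 1"
  and chk_root: "cp (fst (L v)) = 0 \<Longrightarrow> crt (fst (L v)) = v \<and> set (cS (fst (L v))) \<subseteq> {v}"
  and chk_par: "cp (fst (L v)) \<noteq> 0 \<Longrightarrow> (cp (fst (L v)) \<in> N \<and> pok (fst (L v)) (fst (L (cp (fst (L v))))))
        \<or> (\<exists>k. (fst (L v), k) \<in> set (snd (L v)))"
  and chk_nb: "u \<in> N \<Longrightarrow> crt (fst (L u)) = crt (fst (L v)) \<and> (u \<in> set (cS (fst (L v))) \<or> v \<in> set (cS (fst (L u))))"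
  and chk_sl: "int (length (snd (L v))) \<le> \<omega>"
  and chk_slot: "(c, k) \<in> set (snd (L v)) \<Longrightarrow>
       (\<exists>y\<in>N. (k = 1 \<and> y = cp c \<and> pok c (fst (L y))) \<or> (1 < k \<and> (c, k - 1) \<in> set (snd (L y))))"
  using assms unfolding check_def by blast+

lemma check_cong:
  assumes "\<forall>w \<in> insert v N. L w = L' w"
  shows "check \<omega> v N L = check \<omega> v N L'"
proof -
  have v: "L v = L' v" using assms by simp
  have N: "\<And>u. u \<in> N \<Longrightarrow> L u = L' u" using assms by simp
  show ?thesis unfolding check_def v
    using N by (auto 0 4)
qed

definition enc_core :: "core \<Rightarrow> nat" where
  "enc_core c = list_encode [cid c, crt c, cd c, cp c, list_encode (cS c)]"

definition enc_slot :: "core \<times> nat \<Rightarrow> nat" where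
  "enc_slot s = list_encode [enc_core (fst s), snd s]"

definition enc_nat :: "lab \<Rightarrow> nat" where
  "enc_nat l = list_encode [enc_core (fst l), list_encode (map enc_slot (snd l))]"

definition enc :: "lab \<Rightarrow> bool list" where
  "enc l = bin (enc_nat l)"

lemma inj_enc_core: "inj enc_core"
  by (rule injI) (auto simp: enc_core_def list_encode_eq cid_def crt_def cd_def cp_def cS_def prod_eq_iff)

lemma inj_enc_slot: "inj enc_slot"
  using inj_enc_core by (intro injI) (auto simp: enc_slot_def list_encode_eq prod_eq_iff dest: injD)

lemma inj_enc: "inj enc"
proof (rule injI)
  fix a b assume "enc a = enc b"
  then have "enc_nat a = enc_nat b" unfolding enc_def by (rule bin_inj)
  then have "enc_core (fst a) = enc_core (fst b)" "map enc_slot (snd a) = map enc_slot (snd b)"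
    by (auto simp: enc_nat_def list_encode_eq)
  then show "a = b" using inj_enc_core inj_enc_slot
    by (metis injD inj_map_eq_map prod_eq_iff)
qed

definition V :: "int \<Rightarrow> nat \<Rightarrow> (nat \<times> bool list) set \<Rightarrow> bool" where
  "V \<omega> v view \<longleftrightarrow> (\<forall>w b. (w, b) \<in> view \<longrightarrow> b \<in> range enc) \<and>
     check \<omega> v {w. w \<noteq> v \<and> (\<exists>b. (w, b) \<in> view)} (\<lambda>w. inv enc (SOME b. (w, b) \<in> view))"

lemma V_local:
  assumes g: "graph n E"
  shows "V \<omega> v (local_view E \<phi> v) \<longleftrightarrow>
     (\<forall>w. (w = v \<or> E v w) \<longrightarrow> \<phi> w \<in> range enc) \<and> check \<omega> v {w. E v w} (\<lambda>w. inv enc (\<phi> w))"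
proof -
  have mem: "(w, b) \<in> local_view E \<phi> v \<longleftrightarrow> (w = v \<or> E v w) \<and> b = \<phi> w" for w b
    unfolding local_view_def by auto
  have irr: "\<not> E v v" using g unfolding graph_def by blast
  have N: "{w. w \<noteq> v \<and> (\<exists>b. (w, b) \<in> local_view E \<phi> v)} = {w. E v w}"
    using irr by (auto simp: mem)
  have S: "\<forall>w \<in> insert v {w. E v w}. inv enc (SOME b. (w, b) \<in> local_view E \<phi> v) = inv enc (\<phi> w)"
    by (auto simp: mem)
  show ?thesis unfolding V_def N using check_cong[OF S] by (auto simp: mem)
qed


lemma pow_mono2: "2 \<le> (M::nat) \<Longrightarrow> a \<le> b \<Longrightarrow> M ^ a \<le> M ^ b"
  by (rule power_increasing) auto

lemma pow_ge: "2 \<le> (M::nat) \<Longrightarrow> 0 < a \<Longrightarrow> M \<le> M ^ a"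
  using pow_mono2[of M 1 a] by simp

lemma enc_core_bound:
  assumes M: "2 \<le> M" and b: "cid cc \<le> M" "crt cc \<le> M" "cd cc \<le> M" "cp cc \<le> M"
    "\<forall>x\<in>set (cS cc). x \<le> M" "length (cS cc) \<le> a"
  shows "enc_core cc \<le> M ^ (4 ^ a * 4 ^ 5)"
proof -
  have "list_encode (cS cc) \<le> M ^ (4 ^ length (cS cc))" using list_encode_bound[OF M b(5)] .
  also have "\<dots> \<le> M ^ (4 ^ a)" using M b(6) by (intro pow_mono2) (auto intro: power_increasing)
  finally have s: "list_encode (cS cc) \<le> M ^ (4 ^ a)" .
  have MM: "M \<le> M ^ (4 ^ a)" using M by (intro pow_ge) auto
  have M1: "2 \<le> M ^ (4 ^ a)" using M MM by linarith
  have "enc_core cc \<le> (M ^ (4 ^ a)) ^ (4 ^ length [cid cc, crt cc, cd cc, cp cc, list_encode (cS cc)])"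
    unfolding enc_core_def using b MM s by (intro list_encode_bound[OF M1]) auto
  also have "\<dots> = M ^ (4 ^ a * 4 ^ 5)" by (simp add: power_mult)
  finally show ?thesis .
qed

lemma enc_slot_bound:
  assumes M: "2 \<le> M" and A: "0 < A" and c: "enc_core cc \<le> M ^ A" and k: "k \<le> M"
  shows "enc_slot (cc, k) \<le> M ^ (A * 16)"
proof -
  have MM: "M \<le> M ^ A" using M A by (intro pow_ge) auto
  have M1: "2 \<le> M ^ A" using M MM by linarith
  have "enc_slot (cc, k) \<le> (M ^ A) ^ (4 ^ length [enc_core cc, k])"
    unfolding enc_slot_def fst_conv snd_conv using c k MM by (intro list_encode_bound[OF M1]) auto
  also have "\<dots> = M ^ (A * 16)" by (simp add: power_mult)
  finally show ?thesis .
qed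

lemma enc_nat_bound:
  assumes M: "2 \<le> M" and B: "0 < B" and AB: "A \<le> B" and c: "enc_core (fst l) \<le> M ^ A"
    and s: "\<forall>x\<in>set (snd l). enc_slot x \<le> M ^ B" and len: "length (snd l) \<le> b"
  shows "enc_nat l \<le> M ^ (B * 4 ^ b * 16)"
proof -
  have MB: "M \<le> M ^ B" using M B by (intro pow_ge) auto
  have M1: "2 \<le> M ^ B" using M MB by linarith
  have "list_encode (map enc_slot (snd l)) \<le> (M ^ B) ^ (4 ^ length (map enc_slot (snd l)))"
    using s by (intro list_encode_bound[OF M1]) auto
  also have "\<dots> \<le> (M ^ B) ^ (4 ^ b)" using M1 len by (intro pow_mono2) (auto intro: power_increasing)
  finally have sl: "list_encode (map enc_slot (snd l)) \<le> M ^ (B * 4 ^ b)" by (simp add: power_mult)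
  have BB: "M ^ B \<le> M ^ (B * 4 ^ b)" using M by (intro pow_mono2) auto
  have cc: "enc_core (fst l) \<le> M ^ (B * 4 ^ b)" using c pow_mono2[OF M AB] BB by linarith
  have M2: "2 \<le> M ^ (B * 4 ^ b)" using M1 BB by linarith
  have "enc_nat l \<le> (M ^ (B * 4 ^ b)) ^ (4 ^ length [enc_core (fst l), list_encode (map enc_slot (snd l))])"
    unfolding enc_nat_def using sl cc by (intro list_encode_bound[OF M2]) auto
  also have "\<dots> = M ^ (B * 4 ^ b * 16)" by (simp add: power_mult)
  finally show ?thesis .
qed

lemma enc_len_bound:
  assumes n: "1 \<le> n" and X: "enc_nat l \<le> (n + 2) ^ X"
  shows "real (length (enc l)) \<le> (2 * real X + 2) * (log 2 (real n) + 1)"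
proof -
  have "real (length (enc l)) \<le> log 2 (real ((n + 2) ^ X)) + 2"
    unfolding enc_def using X by (intro bin_len_log) auto
  also have "log 2 (real ((n + 2) ^ X)) = real X * log 2 (real n + 2)"
    by (simp add: log_nat_power add.commute)
  also have "log 2 (real n + 2) \<le> log 2 (4 * real n)" using n by (subst log_le_cancel_iff) auto
  also have "log 2 (4 * real n) = 2 + log 2 (real n)"
  proof -
    have "log 2 ((2::real) ^ 2) = real 2 * log 2 2" by (rule log_nat_power) simp
    then have "log 2 (4::real) = 2" by simp
    then show ?thesis using n by (subst log_mult) auto
  qed
  finally have h: "real (length (enc l)) \<le> real X * (2 + log 2 (real n)) + 2"
    by (simp add: mult_left_mono)
  have "0 \<le> log 2 (real n)" using n by simp
  then have "real X * (2 + log 2 (real n)) + 2 \<le> (2 * real X + 2) * (log 2 (real n) + 1)"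
    by (simp add: algebra_simps)
  with h show ?thesis by linarith
qed


lemma rp_props:
  assumes "rtrancl_path R x xs y"
  shows "last (x # xs) = y \<and> (\<forall>i. Suc i < length (x # xs) \<longrightarrow> R ((x # xs) ! i) ((x # xs) ! Suc i))
     \<and> (\<forall>z\<in>set (x # xs). R\<^sup>*\<^sup>* x z) \<and> (\<forall>z\<in>set (butlast (x # xs)). \<exists>w. R z w)"
  using assms
proof (induction rule: rtrancl_path.induct)
  case (base x) then show ?case by simp
next
  case (step x y ys z)
  have idx: "\<forall>i. Suc i < length (x # y # ys) \<longrightarrow> R ((x # y # ys) ! i) ((x # y # ys) ! Suc i)"
  proof (intro allI impI)
    fix i assume "Suc i < length (x # y # ys)"
    then show "R ((x # y # ys) ! i) ((x # y # ys) ! Suc i)"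
      using step by (cases i) auto
  qed
  have "\<forall>z\<in>set (x # y # ys). R\<^sup>*\<^sup>* x z"
    using step by (auto intro: converse_rtranclp_into_rtranclp)
  moreover have "\<forall>z\<in>set (butlast (x # y # ys)). \<exists>w. R z w"
    using step by auto
  ultimately show ?case using step idx by simp
qed

locale snd_ctx =
  fixes \<omega> :: int and n :: nat and E :: "nat \<Rightarrow> nat \<Rightarrow> bool" and L :: "nat \<Rightarrow> lab" and x0 :: nat
  assumes g: "graph n E"
    and chk: "\<forall>v\<in>{1..n}. check \<omega> v {w. E v w} L"
    and x0: "x0 \<in> {1..n}"
begin

abbreviation c where "c v \<equiv> fst (L v)"

definition R :: "core \<Rightarrow> nat \<Rightarrow> nat \<Rightarrow> bool" where
  "R cc a b \<longleftrightarrow> E a b \<and> (\<exists>k. (cc, k) \<in> set (snd (L a)))"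

lemma E_in: "E u v \<Longrightarrow> u \<in> {1..n} \<and> v \<in> {1..n} \<and> E v u \<and> u \<noteq> v"
  using g unfolding graph_def by blast

lemma chk': "v \<in> {1..n} \<Longrightarrow> check \<omega> v {w. E v w} L" using chk by blast

lemma cid_c: "v \<in> {1..n} \<Longrightarrow> cid (c v) = v"
  using chk_id[OF chk'] .

lemma slot_lemma:
  "x \<in> {1..n} \<Longrightarrow> (cc, k) \<in> set (snd (L x)) \<Longrightarrow>
    pok cc (c (cp cc)) \<and> cp cc \<in> {1..n} \<and> (R cc)\<^sup>*\<^sup>* x (cp cc)"
proof (induction k arbitrary: x)
  case 0
  then show ?case using chk_slot[OF chk'[OF 0(1)] 0(2)] by simp
next
  case (Suc k)
  from chk_slot[OF chk'[OF Suc(2)] Suc(3)] obtain y where y: "E x y"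
    and alt: "(Suc k = 1 \<and> y = cp cc \<and> pok cc (c y)) \<or> (1 < Suc k \<and> (cc, Suc k - 1) \<in> set (snd (L y)))"
    by blast
  have yn: "y \<in> {1..n}" using E_in[OF y] by blast
  have Rxy: "R cc x y" unfolding R_def using y Suc(3) by blast
  show ?case
  proof (cases "Suc k = 1")
    case True
    then show ?thesis using alt yn Rxy by auto
  next
    case False
    then have "(cc, k) \<in> set (snd (L y))" using alt by simp
    from Suc.IH[OF yn this] Rxy show ?thesis by (auto intro: converse_rtranclp_into_rtranclp)
  qed
qed

lemma R_E: "(R cc)\<^sup>*\<^sup>* a b \<Longrightarrow> E\<^sup>*\<^sup>* a b"
  by (induction rule: rtranclp_induct) (auto simp: R_def intro: rtranclp.rtrancl_into_rtrancl)

lemma parent_lemma: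
  assumes v: "v \<in> {1..n}" and t: "cp (c v) \<noteq> 0"
  shows "cp (c v) \<in> {1..n} \<and> pok (c v) (c (cp (c v))) \<and> E\<^sup>*\<^sup>* v (cp (c v))"
proof -
  from chk_par[OF chk'[OF v] t] have "(cp (c v) \<in> {w. E v w} \<and> pok (c v) (c (cp (c v)))) \<or> (\<exists>k. (c v, k) \<in> set (snd (L v)))"
    .
  then show ?thesis
  proof
    assume h: "cp (c v) \<in> {w. E v w} \<and> pok (c v) (c (cp (c v)))"
    then show ?thesis using E_in by blast
  next
    assume "\<exists>k. (c v, k) \<in> set (snd (L v))"
    then obtain k where "(c v, k) \<in> set (snd (L v))" by blast
    from slot_lemma[OF v this] show ?thesis using R_E by blast
  qed
qed

definition C where "C = component n E x0"

lemma rt_eq: "E\<^sup>*\<^sup>* a b \<longleftrightarrow> (a, b) \<in> {(u, v). E u v}\<^sup>*"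
  by (simp add: rtranclp_rtrancl_eq[symmetric])

lemma C_iff: "v \<in> C \<longleftrightarrow> v \<in> {1..n} \<and> E\<^sup>*\<^sup>* x0 v"
  unfolding C_def component_def rt_eq by blast

lemma reach_n: "E\<^sup>*\<^sup>* a b \<Longrightarrow> a \<in> {1..n} \<Longrightarrow> b \<in> {1..n}"
  by (induction rule: rtranclp_induct) (auto dest: E_in)

lemma C_closed: "v \<in> C \<Longrightarrow> E\<^sup>*\<^sup>* v y \<Longrightarrow> y \<in> C"
  using C_iff reach_n by (meson rtranclp_trans)

lemma x0C: "x0 \<in> C" using C_iff x0 by blast

definition r where "r = crt (c x0)"

lemma crt_C: "v \<in> C \<Longrightarrow> crt (c v) = r"
proof -
  assume "v \<in> C"
  then have "E\<^sup>*\<^sup>* x0 v" using C_iff by blast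
  then show ?thesis
  proof (induction rule: rtranclp_induct)
    case base then show ?case by (simp add: r_def)
  next
    case (step a b)
    have "a \<in> {1..n}" using E_in step(2) by blast
    from chk_nb[OF chk'[OF this], of b] step show ?case by auto
  qed
qed

definition par :: "nat \<Rightarrow> nat option" where
  "par v = (if cp (c v) = 0 then None else Some (cp (c v)))"

lemma par_Some:
  assumes "v \<in> C" "par v = Some t"
  shows "t \<in> C \<and> pok (c v) (c t) \<and> cd (c t) < cd (c v) \<and> t = cp (c v)"
proof -
  have t: "t = cp (c v)" "cp (c v) \<noteq> 0" using assms(2) unfolding par_def by (auto split: if_splits)
  have vn: "v \<in> {1..n}" using assms(1) C_iff by blast
  from parent_lemma[OF vn t(2)] t assms(1) show ?thesis
    using C_closed unfolding pok_def by blast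
qed

lemma par_None: "v \<in> C \<Longrightarrow> par v = None \<Longrightarrow> v = r \<and> set (cS (c v)) \<subseteq> {v}"
proof -
  assume v: "v \<in> C" "par v = None"
  then have "cp (c v) = 0" unfolding par_def by (auto split: if_splits)
  moreover have "v \<in> {1..n}" using v C_iff by blast
  ultimately have "crt (c v) = v \<and> set (cS (c v)) \<subseteq> {v}" using chk_root[OF chk'] by blast
  then show ?thesis using crt_C[OF v(1)] by simp
qed

abbreviation PR where "PR \<equiv> par_rel C par"

lemma PR_sub: "PR \<subseteq> C \<times> C"
  unfolding par_rel_def using par_Some by auto

lemma PR_cd: "(a, b) \<in> PR \<Longrightarrow> cd (c b) < cd (c a)"
  unfolding par_rel_def using par_Some by auto

lemma PRt_cd: "(a, b) \<in> PR\<^sup>+ \<Longrightarrow> cd (c b) < cd (c a)"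
  by (induction rule: trancl_induct) (auto dest: PR_cd)

lemma PRs_cd: "(a, b) \<in> PR\<^sup>* \<Longrightarrow> cd (c b) \<le> cd (c a)"
  using PRt_cd by (metis less_imp_le order_refl rtrancl_eq_or_trancl)

lemma PRt_C: "(a, b) \<in> PR\<^sup>+ \<Longrightarrow> a \<in> C \<and> b \<in> C"
  using trancl_subset_Sigma[OF PR_sub] by blast

lemma reach_root: "v \<in> C \<Longrightarrow> (v, r) \<in> PR\<^sup>* \<and> r \<in> C"
proof (induction "cd (c v)" arbitrary: v rule: less_induct)
  case less
  show ?case
  proof (cases "par v")
    case None
    then show ?thesis using par_None less(2) by auto
  next
    case (Some t)
    from par_Some[OF less(2) Some] have t: "t \<in> C" "cd (c t) < cd (c v)" by auto
    from less(1)[OF t(2) t(1)] have "(t, r) \<in> PR\<^sup>* \<and> r \<in> C" .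
    moreover have "(v, t) \<in> PR" unfolding par_rel_def using less(2) Some by simp
    ultimately show ?thesis by (meson converse_rtrancl_into_rtrancl)
  qed
qed

lemma rC: "r \<in> C" using reach_root x0C by blast

lemma par_r: "par r = None"
proof (rule ccontr)
  assume "par r \<noteq> None"
  then obtain t where t: "par r = Some t" by blast
  from par_Some[OF rC t] have "t \<in> C" "cd (c t) < cd (c r)" by auto
  with reach_root[of t] PRs_cd show False by fastforce
qed

lemma rooted: "rooted_tree C par r"
  unfolding rooted_tree_def
proof (intro conjI ballI)
  show "r \<in> C" by (rule rC)
  show "par r = None" by (rule par_r)
  fix v assume "v \<in> C - {r}"
  then have "v \<in> C" "par v \<noteq> None" using par_None by auto
  then show "\<exists>u\<in>C. par v = Some u" using par_Some by blast
next
  fix v assume "v \<in> C" then show "(v, r) \<in> PR\<^sup>*" using reach_root by blast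
qed

lemma S_anc: "v \<in> C \<Longrightarrow> u \<in> set (cS (c v)) \<Longrightarrow> u \<noteq> v \<Longrightarrow> anc C par u v"
proof (induction "cd (c v)" arbitrary: v rule: less_induct)
  case less
  show ?case
  proof (cases "par v")
    case None
    then show ?thesis using par_None less by auto
  next
    case (Some t)
    from par_Some[OF less(2) Some] have t: "t \<in> C" "pok (c v) (c t)" "cd (c t) < cd (c v)" by auto
    have vn: "v \<in> {1..n}" using less(2) C_iff by blast
    have ut: "u \<in> set (cS (c t))" using t(2) less(3,4) cid_c[OF vn] unfolding pok_def by blast
    have vt: "(v, t) \<in> PR" unfolding par_rel_def using less(2) Some by simp
    show ?thesis
    proof (cases "u = t")
      case True then show ?thesis using vt unfolding anc_def by auto
    next
      case False
      from less(1)[OF t(3) t(1) ut False] vt show ?thesis unfolding anc_def by auto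
    qed
  qed
qed

lemma elim: "elimination_tree E C par r"
  unfolding elimination_tree_def
proof (intro conjI ballI impI)
  show "rooted_tree C par r" by (rule rooted)
  fix u v assume uv: "u \<in> C" "v \<in> C" "E u v"
  have vn: "v \<in> {1..n}" using uv C_iff by blast
  have "E v u" "u \<noteq> v" using E_in[OF uv(3)] by auto
  with chk_nb[OF chk'[OF vn], of u] have "u \<in> set (cS (c v)) \<or> v \<in> set (cS (c u))" by blast
  then show "anc C par u v \<or> anc C par v u" using S_anc uv \<open>u \<noteq> v\<close> by blast
qed

lemma propagate:
  "w \<in> C \<Longrightarrow> (w = v \<or> anc C par v w) \<Longrightarrow> u \<in> set (cS (c w)) \<Longrightarrow> cd (c u) < cd (c v) \<Longrightarrow> u \<in> set (cS (c v))"
proof (induction "cd (c w)" arbitrary: w rule: less_induct)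
  case less
  show ?case
  proof (cases "w = v")
    case True then show ?thesis using less by simp
  next
    case False
    then have "(w, v) \<in> PR\<^sup>+" using less(3) unfolding anc_def by simp
    then obtain w' where ww': "(w, w') \<in> PR" and rest: "w' = v \<or> (w', v) \<in> PR\<^sup>+"
      by (cases rule: converse_tranclE) blast+
    have pw: "par w = Some w'" using ww' unfolding par_rel_def by simp
    from par_Some[OF less(2) pw] have w': "w' \<in> C" "pok (c w) (c w')" "cd (c w') < cd (c w)" by auto
    have cdvw: "cd (c v) < cd (c w)" using PRt_cd \<open>(w, v) \<in> PR\<^sup>+\<close> by blast
    have "u \<noteq> w" using less(5) cdvw by auto
    have wn: "w \<in> {1..n}" using less(2) C_iff by blast
    have "u \<in> set (cS (c w'))" using w'(2) less(4) \<open>u \<noteq> w\<close> cid_c[OF wn] unfolding pok_def by blast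
    then show ?thesis using less(1)[OF w'(3) w'(1)] rest less(5) unfolding anc_def by blast
  qed
qed

lemma str_sub: "v \<in> C \<Longrightarrow> str E C par v \<subseteq> set (cS (c v))"
proof
  fix u assume v: "v \<in> C" and u: "u \<in> str E C par v"
  show "u \<in> set (cS (c v))"
  proof (cases "u = v")
    case True then show ?thesis using v C_iff chk_in[OF chk'] by blast
  next
    case False
    then obtain w where a: "anc C par u v" and w: "w \<in> subtree C par v" and e: "E u w"
      using u unfolding str_def by blast
    have wC: "w \<in> C" and wv: "w = v \<or> anc C par v w" using w unfolding subtree_def by auto
    have uC: "u \<in> C" using a PRt_C unfolding anc_def by blast
    have cduv: "cd (c u) < cd (c v)" using a PRt_cd unfolding anc_def by blast
    have cdvw: "cd (c v) \<le> cd (c w)" using wv PRt_cd unfolding anc_def by fastforce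
    have wn: "w \<in> {1..n}" using wC C_iff by blast
    have "E w u" "u \<noteq> w" using E_in[OF e] by auto
    with chk_nb[OF chk'[OF wn], of u] have "u \<in> set (cS (c w)) \<or> w \<in> set (cS (c u))" by blast
    moreover have "w \<notin> set (cS (c u))"
    proof
      assume "w \<in> set (cS (c u))"
      then have "anc C par w u" using S_anc uC \<open>u \<noteq> w\<close> by blast
      then have "cd (c w) < cd (c u)" using PRt_cd unfolding anc_def by blast
      then show False using cduv cdvw by simp
    qed
    ultimately have "u \<in> set (cS (c w))" by blast
    then show ?thesis using propagate[OF wC wv _ cduv] by blast
  qed
qed

lemma width: "width_le E C par \<omega>"
  unfolding width_le_def
proof
  fix v assume v: "v \<in> C"
  have "card (str E C par v) \<le> card (set (cS (c v)))" using str_sub[OF v] by (simp add: card_mono)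
  also have "\<dots> \<le> length (cS (c v))" by (rule card_length)
  finally have "int (card (str E C par v)) \<le> int (length (cS (c v)))" by simp
  moreover have "int (length (cS (c v))) \<le> \<omega> + 1" using v C_iff chk_len[OF chk'] by blast
  ultimately show "int (card (str E C par v)) - 1 \<le> \<omega>" by simp
qed

definition goodp :: "nat \<Rightarrow> nat list \<Rightarrow> bool" where
  "goodp s p \<longleftrightarrow> oriented_path E C p \<and> hd p = s \<and> last p = the (par s) \<and>
      (\<forall>z\<in>set (butlast p). \<exists>k. (c s, k) \<in> set (snd (L z)))"

lemma goodp_ex:
  assumes s: "s \<in> C" "par s = Some t" "\<not> E s t"
  shows "\<exists>p. goodp s p"
proof -
  have sn: "s \<in> {1..n}" using s C_iff by blast
  have tt: "t = cp (c s)" "cp (c s) \<noteq> 0" using s(2) unfolding par_def by (auto split: if_splits)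
  from chk_par[OF chk'[OF sn] tt(2)] tt s(3) have "\<exists>k. (c s, k) \<in> set (snd (L s))" by auto
  then obtain k where k: "(c s, k) \<in> set (snd (L s))" by blast
  from slot_lemma[OF sn k] have "(R (c s))\<^sup>*\<^sup>* s t" using tt by simp
  then obtain xs where "rtrancl_path (R (c s)) s xs t" using rtranclp_eq_rtrancl_path by metis
  then obtain xs' where p: "rtrancl_path (R (c s)) s xs' t" "distinct (s # xs')"
    using rtrancl_path_distinct by metis
  note pp = rp_props[OF p(1)]
  have "set (s # xs') \<subseteq> C"
  proof
    fix z assume "z \<in> set (s # xs')"
    then have "(R (c s))\<^sup>*\<^sup>* s z" using pp by blast
    then show "z \<in> C" using R_E C_closed s(1) by blast
  qed
  moreover have "\<forall>i. Suc i < length (s # xs') \<longrightarrow> E ((s # xs') ! i) ((s # xs') ! Suc i)"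
    using pp unfolding R_def by blast
  moreover have "\<forall>z\<in>set (butlast (s # xs')). \<exists>k. (c s, k) \<in> set (snd (L z))"
    using pp unfolding R_def by blast
  ultimately have "goodp s (s # xs')"
    unfolding goodp_def oriented_path_def using p(2) pp s(2) by simp
  then show ?thesis by blast
qed

definition Pth where "Pth s = (SOME p. goodp s p)"

definition PS where "PS = Pth ` {s \<in> C. par s \<noteq> None \<and> \<not> E s (the (par s))}"

lemma Pth_good: "s \<in> C \<Longrightarrow> par s \<noteq> None \<Longrightarrow> \<not> E s (the (par s)) \<Longrightarrow> goodp s (Pth s)"
  unfolding Pth_def using goodp_ex by (metis option.collapse someI_ex)

lemma psys: "path_system E C PS"
  unfolding path_system_def PS_def using Pth_good unfolding goodp_def by blast

lemma witn: "witnesses E C PS par"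
  unfolding witnesses_def
proof (intro ballI allI impI)
  fix v u assume v: "v \<in> C" and pu: "par v = Some u"
  show "E v u \<or> (\<exists>p\<in>PS. hd p = v \<and> last p = u)"
  proof (cases "E v u")
    case False
    then have "goodp v (Pth v)" using Pth_good v pu by simp
    moreover have "Pth v \<in> PS" unfolding PS_def using v pu False by auto
    ultimately show ?thesis using pu unfolding goodp_def by auto
  qed simp
qed

lemma cong: "congestion_le C PS \<omega>"
  unfolding congestion_le_def congestion_at_def
proof
  fix z assume z: "z \<in> C"
  let ?sl = "snd (L z)"
  have sub: "{p \<in> PS. z \<in> set (butlast p)} \<subseteq> Pth ` (cid ` fst ` set ?sl)"
  proof
    fix p assume "p \<in> {p \<in> PS. z \<in> set (butlast p)}"
    then obtain s where s: "s \<in> C" "par s \<noteq> None" "\<not> E s (the (par s))" "p = Pth s" "z \<in> set (butlast p)"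
      unfolding PS_def by auto
    then have "\<exists>k. (c s, k) \<in> set ?sl" using Pth_good unfolding goodp_def by blast
    then have "c s \<in> fst ` set ?sl" by force
    moreover have "cid (c s) = s" using s(1) C_iff cid_c by blast
    ultimately have "s \<in> cid ` fst ` set ?sl" by force
    then show "p \<in> Pth ` (cid ` fst ` set ?sl)" using s(4) by blast
  qed
  have "card {p \<in> PS. z \<in> set (butlast p)} \<le> card (Pth ` (cid ` fst ` set ?sl))"
    using sub by (intro card_mono) auto
  also have "\<dots> \<le> card (set ?sl)"
    by (meson card_image_le dual_order.trans finite_imageI finite_set)
  also have "\<dots> \<le> length ?sl" by (rule card_length)
  finally have "int (card {p \<in> PS. z \<in> set (butlast p)}) \<le> int (length ?sl)" by simp
  also have "\<dots> \<le> \<omega>" using z C_iff chk_sl[OF chk'] by blast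
  finally show "int (card {p \<in> PS. z \<in> set (butlast p)}) \<le> \<omega>" .
qed

lemma good_all: "\<exists>par r PS. elimination_tree E C par r \<and> width_le E C par \<omega> \<and>
        path_system E C PS \<and> congestion_le C PS \<omega> \<and> witnesses E C PS par"
  using elim width psys cong witn by blast

end

lemma soundness:
  assumes g: "graph n E" and chk: "\<forall>v\<in>{1..n}. check \<omega> v {w. E v w} L"
  shows "lv_treewidth_le \<omega> n E"
  unfolding lv_treewidth_le_def Let_def
proof
  fix x assume x: "x \<in> {1..n}"
  interpret snd_ctx \<omega> n E L x using g chk x by unfold_locales
  show "\<exists>par r PS. elimination_tree E (component n E x) par r \<and> width_le E (component n E x) par \<omega> \<and>
        path_system E (component n E x) PS \<and> congestion_le (component n E x) PS \<omega> \<and> witnesses E (component n E x) PS par"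
    using good_all unfolding C_def .
qed


definition dep :: "nat set \<Rightarrow> (nat \<Rightarrow> nat option) \<Rightarrow> nat \<Rightarrow> nat" where
  "dep C par v = card {u. anc C par u v}"

definition pnum :: "(nat \<Rightarrow> nat option) \<Rightarrow> nat \<Rightarrow> nat" where
  "pnum par v = (case par v of None \<Rightarrow> 0 | Some t \<Rightarrow> t)"

definition mkcore :: "(nat \<Rightarrow> nat \<Rightarrow> bool) \<Rightarrow> nat set \<Rightarrow> (nat \<Rightarrow> nat option) \<Rightarrow> nat \<Rightarrow> nat \<Rightarrow> core" where
  "mkcore E C par r v = (v, r, dep C par v, pnum par v, sorted_list_of_set (str E C par v))"

definition Qp :: "nat list set \<Rightarrow> (nat \<Rightarrow> nat option) \<Rightarrow> nat \<Rightarrow> nat list" where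
  "Qp PS par s = (SOME p. p \<in> PS \<and> hd p = s \<and> last p = the (par s))"

definition SL where
  "SL E C par r PS x = {(mkcore E C par r s, length (Qp PS par s) - 1 - i) | s i.
      s \<in> C \<and> par s \<noteq> None \<and> \<not> E s (the (par s)) \<and> i < length (Qp PS par s) - 1 \<and> Qp PS par s ! i = x}"

definition slots where
  "slots E C par r PS x = (SOME xs. distinct xs \<and> set xs = SL E C par r PS x)"

definition labC :: "(nat \<Rightarrow> nat \<Rightarrow> bool) \<Rightarrow> nat set \<Rightarrow> (nat \<Rightarrow> nat option) \<Rightarrow> nat \<Rightarrow> nat list set \<Rightarrow> nat \<Rightarrow> lab" where
  "labC E C par r PS x = (mkcore E C par r x, slots E C par r PS x)"

locale cmp_ctx =
  fixes \<omega> :: int and n :: nat and E :: "nat \<Rightarrow> nat \<Rightarrow> bool" and x0 :: nat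
    and par :: "nat \<Rightarrow> nat option" and r :: nat and PS :: "nat list set"
  assumes g: "graph n E" and x0: "x0 \<in> {1..n}"
    and et: "elimination_tree E (component n E x0) par r"
    and wd: "width_le E (component n E x0) par \<omega>"
    and ps: "path_system E (component n E x0) PS"
    and cg: "congestion_le (component n E x0) PS \<omega>"
    and wt: "witnesses E (component n E x0) PS par"
begin

abbreviation C where "C \<equiv> component n E x0"
abbreviation PR where "PR \<equiv> par_rel C par"
abbreviation L where "L \<equiv> labC E C par r PS"
abbreviation core where "core \<equiv> mkcore E C par r"

lemma E_in: "E u v \<Longrightarrow> u \<in> {1..n} \<and> v \<in> {1..n} \<and> E v u \<and> u \<noteq> v"
  using g unfolding graph_def by blast

lemma C_n: "C \<subseteq> {1..n}" unfolding component_def by blast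

lemma finC: "finite C" using C_n finite_subset by blast

lemma cardC: "card C \<le> n" using card_mono[OF _ C_n] by simp

lemma C_E: "u \<in> C \<Longrightarrow> E u v \<Longrightarrow> v \<in> C"
  unfolding component_def using E_in by (auto intro: rtrancl_into_rtrancl)

lemma rt: "rooted_tree C par r" using et unfolding elimination_tree_def by blast

lemma rC: "r \<in> C" and par_r: "par r = None"
  and par_ex: "v \<in> C - {r} \<Longrightarrow> \<exists>u\<in>C. par v = Some u"
  and to_r: "v \<in> C \<Longrightarrow> (v, r) \<in> PR\<^sup>*"
  using rt unfolding rooted_tree_def by blast+

lemma par_Some: "v \<in> C \<Longrightarrow> par v = Some t \<Longrightarrow> t \<in> C \<and> v \<noteq> r"
  using par_ex[of v] par_r by (cases "v = r") auto

lemma par_None: "v \<in> C \<Longrightarrow> par v = None \<Longrightarrow> v = r"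
  using par_ex[of v] by auto

lemma PR_sub: "PR \<subseteq> C \<times> C" unfolding par_rel_def using par_Some by auto

lemma anc_C: "anc C par u v \<Longrightarrow> u \<in> C \<and> v \<in> C"
  using trancl_subset_Sigma[OF PR_sub] unfolding anc_def by blast

lemma sv: "single_valued PR" unfolding single_valued_def par_rel_def by auto

lemma acyc: "\<not> anc C par v v"
proof
  assume a: "anc C par v v"
  then have vC: "v \<in> C" using anc_C by blast
  have vv: "(v, v) \<in> PR\<^sup>+" using a unfolding anc_def .
  have "(v, x) \<in> PR\<^sup>* \<Longrightarrow> (x, v) \<in> PR\<^sup>+" for x
  proof (induction rule: rtrancl_induct)
    case base then show ?case using vv .
  next
    case (step x y)
    from tranclD[OF step(3)] obtain z where z: "(x, z) \<in> PR" "(z, v) \<in> PR\<^sup>*" by blast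
    have "z = y" using z(1) step(2) sv unfolding single_valued_def by blast
    then have "(y, v) \<in> PR\<^sup>*" using z(2) by blast
    then have "y = v \<or> (y, v) \<in> PR\<^sup>+" using rtranclD[of y v PR] by blast
    then show ?case using vv by fast
  qed
  from this[OF to_r[OF vC]] have "(r, v) \<in> PR\<^sup>+" .
  then obtain z where "(r, z) \<in> PR" using tranclD[of r v PR] by blast
  then show False using par_r unfolding par_rel_def by simp
qed

lemma anc_par: "v \<in> C \<Longrightarrow> par v = Some t \<Longrightarrow> anc C par t v"
  unfolding anc_def par_rel_def by auto

lemma anc_trans: "anc C par a b \<Longrightarrow> anc C par b c \<Longrightarrow> anc C par a c"
  unfolding anc_def by auto

lemma anc_step: "v \<in> C \<Longrightarrow> par v = Some t \<Longrightarrow> anc C par u v \<Longrightarrow> u = t \<or> anc C par u t"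
proof -
  assume v: "v \<in> C" "par v = Some t" "anc C par u v"
  then have "(v, u) \<in> PR\<^sup>+" unfolding anc_def by simp
  from tranclD[OF this] obtain z where z: "(v, z) \<in> PR" "(z, u) \<in> PR\<^sup>*" by blast
  have "z = t" using z(1) v(2) unfolding par_rel_def by auto
  then have "t = u \<or> (t, u) \<in> PR\<^sup>+" using z(2) rtranclD[of z u PR] by blast
  then show ?thesis unfolding anc_def by fast
qed

lemma fin_anc: "finite {u. anc C par u v}"
proof -
  have "{u. anc C par u v} \<subseteq> C" using anc_C by blast
  then show ?thesis using finC finite_subset by blast
qed

lemma dep_lt: "v \<in> C \<Longrightarrow> par v = Some t \<Longrightarrow> dep C par t < dep C par v"
  unfolding dep_def
proof (rule psubset_card_mono[OF fin_anc])
  assume v: "v \<in> C" "par v = Some t"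
  have "{u. anc C par u t} \<subseteq> {u. anc C par u v}" using anc_par[OF v] anc_trans by blast
  moreover have "t \<in> {u. anc C par u v}" "t \<notin> {u. anc C par u t}" using anc_par[OF v] acyc by auto
  ultimately show "{u. anc C par u t} \<subset> {u. anc C par u v}" by blast
qed

lemma dep_le: "dep C par v \<le> n"
proof -
  have "{u. anc C par u v} \<subseteq> C" using anc_C by blast
  then have "dep C par v \<le> card C" unfolding dep_def using finC by (simp add: card_mono)
  then show ?thesis using cardC by simp
qed

lemma str_C: "v \<in> C \<Longrightarrow> str E C par v \<subseteq> C"
  unfolding str_def using anc_C by blast

lemma fin_str: "v \<in> C \<Longrightarrow> finite (str E C par v)"
  using str_C finC finite_subset by blast

lemma set_S: "v \<in> C \<Longrightarrow> set (cS (core v)) = str E C par v"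
  unfolding mkcore_def using fin_str by simp

lemma len_S: "v \<in> C \<Longrightarrow> length (cS (core v)) = card (str E C par v)"
  unfolding mkcore_def using fin_str by simp

lemma str_par: "v \<in> C \<Longrightarrow> par v = Some t \<Longrightarrow> str E C par v - {v} \<subseteq> str E C par t"
proof
  fix u assume v: "v \<in> C" "par v = Some t" and u: "u \<in> str E C par v - {v}"
  then obtain w where a: "anc C par u v" and w: "w \<in> subtree C par v" and e: "E u w"
    unfolding str_def by blast
  have "w \<in> subtree C par t" using w anc_par[OF v] anc_trans unfolding subtree_def by blast
  then show "u \<in> str E C par t" using anc_step[OF v a] e unfolding str_def by blast
qed

lemma str_r: "str E C par r = {r}"
proof -
  have "\<not> anc C par u r" for u
  proof
    assume "anc C par u r"
    then have "(r, u) \<in> PR\<^sup>+" unfolding anc_def .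
    then obtain z where "(r, z) \<in> PR" using tranclD[of r u PR] by blast
    then show False using par_r unfolding par_rel_def by simp
  qed
  then show ?thesis unfolding str_def by auto
qed

lemma pnum_Some: "par v = Some t \<Longrightarrow> pnum par v = t" unfolding pnum_def by simp

lemma core_sel': "cid (core v) = v" "crt (core v) = r" "cd (core v) = dep C par v" "cp (core v) = pnum par v"
  unfolding mkcore_def by simp_all

lemma pok_core: "v \<in> C \<Longrightarrow> par v = Some t \<Longrightarrow> pok (core v) (core t)"
proof -
  assume v: "v \<in> C" "par v = Some t"
  have tC: "t \<in> C" using par_Some[OF v] by blast
  show ?thesis unfolding pok_def
    unfolding core_sel' set_S[OF v(1)] set_S[OF tC] pnum_Some[OF v(2)]
    using dep_lt[OF v] str_par[OF v] by blast
qed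

lemma wit: "s \<in> C \<Longrightarrow> par s = Some t \<Longrightarrow> \<not> E s t \<Longrightarrow> \<exists>p\<in>PS. hd p = s \<and> last p = t"
  using wt unfolding witnesses_def by blast

lemma Qp_props:
  assumes s: "s \<in> C" "par s = Some t" "\<not> E s t"
  shows "Qp PS par s \<in> PS \<and> hd (Qp PS par s) = s \<and> last (Qp PS par s) = t \<and>
     oriented_path E C (Qp PS par s) \<and> 2 \<le> length (Qp PS par s)"
proof -
  have ex: "\<exists>p. p \<in> PS \<and> hd p = s \<and> last p = the (par s)" using wit[OF s] s(2) by auto
  have q0: "Qp PS par s \<in> PS \<and> hd (Qp PS par s) = s \<and> last (Qp PS par s) = the (par s)"
    unfolding Qp_def by (rule someI_ex[OF ex])
  have q: "Qp PS par s \<in> PS \<and> hd (Qp PS par s) = s \<and> last (Qp PS par s) = t"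
    using q0 s(2) by simp
  then have op: "oriented_path E C (Qp PS par s)" using ps unfolding path_system_def by blast
  have "s \<noteq> t" using anc_par[OF s(1,2)] acyc by blast
  have "2 \<le> length (Qp PS par s)"
  proof (rule ccontr)
    assume "\<not> 2 \<le> length (Qp PS par s)"
    moreover have "Qp PS par s \<noteq> []" using op unfolding oriented_path_def by blast
    ultimately have "length (Qp PS par s) = 1" by (cases "Qp PS par s") (auto simp: Suc_le_eq)
    then show False using q \<open>s \<noteq> t\<close> by (cases "Qp PS par s") auto
  qed
  then show ?thesis using q op by blast
qed

lemma finPS: "finite {p \<in> PS. x \<in> set (butlast p)}"
proof -
  have "PS \<subseteq> {xs. set xs \<subseteq> C \<and> length xs \<le> card C}"
  proof
    fix p assume "p \<in> PS"
    then have "oriented_path E C p" using ps unfolding path_system_def by blast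
    then have d: "distinct p" "set p \<subseteq> C" unfolding oriented_path_def by auto
    have "length p = card (set p)" using distinct_card[OF d(1)] by simp
    also have "\<dots> \<le> card C" using card_mono[OF finC d(2)] .
    finally show "p \<in> {xs. set xs \<subseteq> C \<and> length xs \<le> card C}" using d by simp
  qed
  then have "finite PS" using finite_lists_length_le[OF finC] finite_subset by blast
  then show ?thesis by simp
qed

definition fpos where
  "fpos x p = (core (hd p), length p - 1 - (THE i. i < length p \<and> p ! i = x))"

lemma SL_sub: "SL E C par r PS x \<subseteq> fpos x ` {p \<in> PS. x \<in> set (butlast p)}"
proof
  fix z assume "z \<in> SL E C par r PS x"
  then obtain s i where z: "z = (core s, length (Qp PS par s) - 1 - i)" and
    s: "s \<in> C" "par s \<noteq> None" "\<not> E s (the (par s))" and i: "i < length (Qp PS par s) - 1"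
    "Qp PS par s ! i = x"
    unfolding SL_def by blast
  obtain t where t: "par s = Some t" using s by blast
  let ?p = "Qp PS par s"
  note q = Qp_props[OF s(1) t s(3)[unfolded t, simplified]]
  have d: "distinct ?p" using q unfolding oriented_path_def by blast
  have th: "(THE j. j < length ?p \<and> ?p ! j = x) = i"
    using d i by (auto simp: nth_eq_iff_index_eq)
  have bi: "butlast ?p ! i = x" using i by (simp add: nth_butlast)
  have "i < length (butlast ?p)" using i by simp
  then have "x \<in> set (butlast ?p)" using bi nth_mem by metis
  moreover have "z = fpos x ?p" unfolding fpos_def th using z q by simp
  ultimately show "z \<in> fpos x ` {p \<in> PS. x \<in> set (butlast p)}" using q by blast
qed

lemma finSL: "finite (SL E C par r PS x)"
  using SL_sub finPS finite_subset by blast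

lemma cardSL: "x \<in> C \<Longrightarrow> int (card (SL E C par r PS x)) \<le> \<omega>"
proof -
  assume x: "x \<in> C"
  have "card (SL E C par r PS x) \<le> card (fpos x ` {p \<in> PS. x \<in> set (butlast p)})"
    using SL_sub finPS by (intro card_mono) auto
  also have "\<dots> \<le> card {p \<in> PS. x \<in> set (butlast p)}" by (rule card_image_le[OF finPS])
  finally have "int (card (SL E C par r PS x)) \<le> int (congestion_at PS x)"
    unfolding congestion_at_def by simp
  also have "\<dots> \<le> \<omega>" using cg x unfolding congestion_le_def by blast
  finally show ?thesis .
qed

lemma slots_set: "set (slots E C par r PS x) = SL E C par r PS x \<and> distinct (slots E C par r PS x)"
proof -
  have "\<exists>xs. distinct xs \<and> set xs = SL E C par r PS x" using finite_distinct_list[OF finSL] by blast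
  from someI_ex[OF this] show ?thesis unfolding slots_def by blast
qed

lemma L_fst: "fst (L v) = core v" unfolding labC_def by simp
lemma L_snd: "snd (L v) = slots E C par r PS v" unfolding labC_def by simp


lemma main_check: "v \<in> C \<Longrightarrow> check \<omega> v {w. E v w} L"
proof -
  assume vC: "v \<in> C"
  let ?N = "{w. E v w}"
  have a: "cid (fst (L v)) = v" by (simp add: L_fst core_sel')
  have b1: "v \<in> set (cS (fst (L v)))" using set_S[OF vC] by (simp add: L_fst str_def)
  have "int (card (str E C par v)) - 1 \<le> \<omega>" using wd vC unfolding width_le_def by blast
  then have b2: "int (length (cS (fst (L v)))) \<le> \<omega> + 1"
    unfolding L_fst len_S[OF vC] by simp
  have cc: "cp (fst (L v)) = 0 \<longrightarrow> crt (fst (L v)) = v \<and> set (cS (fst (L v))) \<subseteq> {v}"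
  proof
    assume "cp (fst (L v)) = 0"
    then have "pnum par v = 0" by (simp add: L_fst core_sel')
    then have "par v = None"
    proof (cases "par v")
      case (Some t)
      then have "t \<in> C" using par_Some[OF vC] by blast
      then have "t \<noteq> 0" using C_n by auto
      then show ?thesis using Some \<open>pnum par v = 0\<close> pnum_Some by simp
    qed
    then have "v = r" using par_None vC by blast
    then show "crt (fst (L v)) = v \<and> set (cS (fst (L v))) \<subseteq> {v}"
      using set_S[OF vC] str_r by (simp add: L_fst core_sel')
  qed
  have d: "cp (fst (L v)) \<noteq> 0 \<longrightarrow> (cp (fst (L v)) \<in> ?N \<and> pok (fst (L v)) (fst (L (cp (fst (L v))))))
        \<or> (\<exists>k. (fst (L v), k) \<in> set (snd (L v)))"
  proof
    assume "cp (fst (L v)) \<noteq> 0"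
    then have "pnum par v \<noteq> 0" by (simp add: L_fst core_sel')
    then obtain t where t: "par v = Some t" unfolding pnum_def by (cases "par v") auto
    have cpt: "cp (fst (L v)) = t" using t by (simp add: L_fst core_sel' pnum_Some)
    show "(cp (fst (L v)) \<in> ?N \<and> pok (fst (L v)) (fst (L (cp (fst (L v))))))
        \<or> (\<exists>k. (fst (L v), k) \<in> set (snd (L v)))"
    proof (cases "E v t")
      case True
      then show ?thesis using pok_core[OF vC t] cpt by (simp add: L_fst)
    next
      case False
      note q = Qp_props[OF vC t False]
      have ne: "Qp PS par v \<noteq> []" using q by auto
      have q0: "Qp PS par v ! 0 = v" using q hd_conv_nth[OF ne] by simp
      have i0: "0 < length (Qp PS par v) - 1" using q by simp
      have "(core v, length (Qp PS par v) - 1 - 0) \<in> SL E C par r PS v"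
        unfolding SL_def
        by (rule CollectI, rule exI[of _ v], rule exI[of _ 0]) (use vC t False i0 q0 in simp)
      then show ?thesis using slots_set by (auto simp: L_fst L_snd)
    qed
  qed
  have e: "\<forall>u\<in>?N. crt (fst (L u)) = crt (fst (L v)) \<and> (u \<in> set (cS (fst (L v))) \<or> v \<in> set (cS (fst (L u))))"
  proof
    fix u assume "u \<in> ?N"
    then have e: "E v u" by simp
    then have uC: "u \<in> C" using C_E vC by blast
    have eu: "E u v" using E_in[OF e] by blast
    have "anc C par u v \<or> anc C par v u" using et vC uC e unfolding elimination_tree_def by blast
    then have "u \<in> str E C par v \<or> v \<in> str E C par u"
      using e eu unfolding str_def subtree_def using vC uC by blast
    then show "crt (fst (L u)) = crt (fst (L v)) \<and> (u \<in> set (cS (fst (L v))) \<or> v \<in> set (cS (fst (L u))))"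
      using set_S[OF vC] set_S[OF uC] by (simp add: L_fst core_sel')
  qed
  have "length (snd (L v)) = card (SL E C par r PS v)"
    unfolding L_snd using slots_set distinct_card by metis
  then have f: "int (length (snd (L v))) \<le> \<omega>"
    using cardSL[OF vC] by simp
  have gg: "\<forall>cc k. (cc, k) \<in> set (snd (L v)) \<longrightarrow>
       (\<exists>y\<in>?N. (k = 1 \<and> y = cp cc \<and> pok cc (fst (L y))) \<or> (1 < k \<and> (cc, k - 1) \<in> set (snd (L y))))"
  proof (intro allI impI)
    fix cc k assume "(cc, k) \<in> set (snd (L v))"
    then have "(cc, k) \<in> SL E C par r PS v" using slots_set by (simp add: L_snd)
    then obtain s i where z: "cc = core s" "k = length (Qp PS par s) - 1 - i" and
      s: "s \<in> C" "par s \<noteq> None" "\<not> E s (the (par s))" and i: "i < length (Qp PS par s) - 1"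
      "Qp PS par s ! i = v"
      unfolding SL_def by blast
    obtain t where t: "par s = Some t" using s by blast
    have nE: "\<not> E s t" using s t by simp
    let ?p = "Qp PS par s"
    note q = Qp_props[OF s(1) t nE]
    let ?y = "?p ! Suc i"
    have Evy: "E v ?y" using q i unfolding oriented_path_def by auto
    show "\<exists>y\<in>?N. (k = 1 \<and> y = cp cc \<and> pok cc (fst (L y))) \<or> (1 < k \<and> (cc, k - 1) \<in> set (snd (L y)))"
    proof (cases "k = 1")
      case True
      then have "Suc i = length ?p - 1" using z i by simp
      moreover have ne: "?p \<noteq> []" using q by auto
      ultimately have "?y = t" using q last_conv_nth[OF ne] by simp
      moreover have "cp cc = t" using z t by (simp add: core_sel' pnum_Some)
      ultimately show ?thesis using Evy True pok_core[OF s(1) t] z by (auto simp: L_fst)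
    next
      case False
      then have k1: "1 < k" using z i by simp
      have i1: "Suc i < length ?p - 1" using z i k1 by simp
      have "(core s, length ?p - 1 - Suc i) \<in> SL E C par r PS ?y"
        unfolding SL_def
        by (rule CollectI, rule exI[of _ s], rule exI[of _ "Suc i"]) (use s i1 in simp)
      moreover have "length ?p - 1 - Suc i = k - 1" using z by simp
      ultimately have "(cc, k - 1) \<in> set (snd (L ?y))" using slots_set z by (simp add: L_snd)
      then show ?thesis using Evy k1 by blast
    qed
  qed
  show ?thesis unfolding check_def using a b1 b2 cc d e f gg by blast
qed

end


context cmp_ctx
begin

lemma PS_len: "p \<in> PS \<Longrightarrow> length p \<le> n"
proof -
  assume "p \<in> PS"
  then have "oriented_path E C p" using ps unfolding path_system_def by blast
  then have d: "distinct p" "set p \<subseteq> C" unfolding oriented_path_def by auto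
  have "length p = card (set p)" using distinct_card[OF d(1)] by simp
  also have "\<dots> \<le> card C" using card_mono[OF finC d(2)] .
  finally show ?thesis using cardC by simp
qed

lemma core_le:
  assumes s: "s \<in> C"
  shows "enc_core (core s) \<le> (n + 2) ^ (4 ^ nat (\<omega> + 1) * 4 ^ 5)"
proof (rule enc_core_bound)
  show "2 \<le> n + 2" by simp
  show "cid (core s) \<le> n + 2" using s C_n by (auto simp: core_sel')
  show "crt (core s) \<le> n + 2" using rC C_n by (auto simp: core_sel')
  show "cd (core s) \<le> n + 2" using dep_le[of s] by (simp add: core_sel')
  show "cp (core s) \<le> n + 2"
  proof (cases "par s")
    case None then show ?thesis by (simp add: core_sel' pnum_def)
  next
    case (Some t)
    then have "t \<in> C" using par_Some[OF s] by blast
    then show ?thesis using C_n Some by (auto simp: core_sel' pnum_def)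
  qed
  show "\<forall>x\<in>set (cS (core s)). x \<le> n + 2" using set_S[OF s] str_C[OF s] C_n by auto
  have "int (card (str E C par s)) - 1 \<le> \<omega>" using wd s unfolding width_le_def by blast
  then show "length (cS (core s)) \<le> nat (\<omega> + 1)" using len_S[OF s] by simp
qed

definition XX where "XX = 4 ^ nat (\<omega> + 1) * 4 ^ 5 * 16 * 4 ^ nat \<omega> * 16"

lemma lab_le: "v \<in> C \<Longrightarrow> enc_nat (L v) \<le> (n + 2) ^ XX"
proof -
  assume vC: "v \<in> C"
  let ?A = "4 ^ nat (\<omega> + 1) * 4 ^ 5"
  have sl: "\<forall>x\<in>set (snd (L v)). enc_slot x \<le> (n + 2) ^ (?A * 16)"
  proof
    fix x assume "x \<in> set (snd (L v))"
    then have "x \<in> SL E C par r PS v" using slots_set by (simp add: L_snd)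
    then obtain s i where z: "x = (core s, length (Qp PS par s) - 1 - i)" and
      s: "s \<in> C" "par s \<noteq> None" "\<not> E s (the (par s))"
      unfolding SL_def by blast
    obtain t where t: "par s = Some t" using s by blast
    have "Qp PS par s \<in> PS" using Qp_props[OF s(1) t] s(3) t by simp
    then have "length (Qp PS par s) - 1 - i \<le> n + 2" using PS_len by fastforce
    then show "enc_slot x \<le> (n + 2) ^ (?A * 16)" unfolding z
      by (intro enc_slot_bound core_le s(1)) auto
  qed
  have len: "length (snd (L v)) \<le> nat \<omega>"
  proof -
    have "length (snd (L v)) = card (SL E C par r PS v)"
      unfolding L_snd using slots_set distinct_card by metis
    then show ?thesis using cardSL[OF vC] by simp
  qed
  have "enc_nat (L v) \<le> (n + 2) ^ (?A * 16 * 4 ^ nat \<omega> * 16)"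
  proof (rule enc_nat_bound[where A = "?A", OF _ _ _ _ sl len])
    show "enc_core (fst (L v)) \<le> (n + 2) ^ ?A" using core_le[OF vC] by (simp add: L_fst)
  qed auto
  then show ?thesis unfolding XX_def .
qed

end

definition good :: "int \<Rightarrow> (nat \<Rightarrow> nat \<Rightarrow> bool) \<Rightarrow> nat set \<Rightarrow> (nat \<Rightarrow> nat option) \<times> nat \<times> nat list set \<Rightarrow> bool" where
  "good \<omega> E C t = (case t of (par, r, PS) \<Rightarrow> elimination_tree E C par r \<and> width_le E C par \<omega> \<and>
        path_system E C PS \<and> congestion_le C PS \<omega> \<and> witnesses E C PS par)"

definition Gch where "Gch \<omega> E C = (SOME t. good \<omega> E C t)"

definition Lab :: "int \<Rightarrow> nat \<Rightarrow> (nat \<Rightarrow> nat \<Rightarrow> bool) \<Rightarrow> nat \<Rightarrow> lab" where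
  "Lab \<omega> n E x = (case Gch \<omega> E (component n E x) of (par, r, PS) \<Rightarrow> labC E (component n E x) par r PS x)"

lemma good_Gch:
  assumes "lv_treewidth_le \<omega> n E" "x \<in> {1..n}"
  shows "good \<omega> E (component n E x) (Gch \<omega> E (component n E x))"
proof -
  have "\<exists>t. good \<omega> E (component n E x) t"
    using assms unfolding lv_treewidth_le_def Let_def good_def by fastforce
  then show ?thesis unfolding Gch_def by (rule someI_ex)
qed

lemma comp_eq:
  assumes g: "graph n E" and w: "w \<in> component n E v"
  shows "component n E w = component n E v"
proof -
  let ?R = "{(u, v). E u v}"
  have sym: "sym (?R\<^sup>*)" using g unfolding graph_def by (intro sym_rtrancl) (auto intro: symI)
  have vw: "(v, w) \<in> ?R\<^sup>*" using w unfolding component_def by blast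
  then have wv: "(w, v) \<in> ?R\<^sup>*" using sym by (meson symD)
  show ?thesis unfolding component_def using vw wv by (meson rtrancl_trans)
qed

lemma comp_self: "v \<in> {1..n} \<Longrightarrow> v \<in> component n E v"
  unfolding component_def by simp

lemma complete_local:
  assumes g: "graph n E" and lv: "lv_treewidth_le \<omega> n E" and v: "v \<in> {1..n}"
  shows "check \<omega> v {w. E v w} (Lab \<omega> n E) \<and>
     real (length (enc (Lab \<omega> n E v))) \<le> (2 * real (4 ^ nat (\<omega> + 1) * 4 ^ 5 * 16 * 4 ^ nat \<omega> * 16) + 2) * (log 2 (real n) + 1)"
proof -
  obtain par r PS where G: "Gch \<omega> E (component n E v) = (par, r, PS)" by (cases "Gch \<omega> E (component n E v)") auto
  from good_Gch[OF lv v] G have gd: "good \<omega> E (component n E v) (par, r, PS)" by simp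
  interpret cmp_ctx \<omega> n E v par r PS
    using g v gd unfolding good_def by unfold_locales auto
  have vC: "v \<in> C" using comp_self[OF v] .
  have LL: "Lab \<omega> n E w = L w" if "w \<in> C" for w
  proof -
    have "component n E w = C" using comp_eq[OF g that] .
    then show ?thesis unfolding Lab_def using G by simp
  qed
  have ins: "\<forall>w\<in>insert v {w. E v w}. Lab \<omega> n E w = L w"
    using LL vC C_E by blast
  have c1: "check \<omega> v {w. E v w} (Lab \<omega> n E)"
    using check_cong[OF ins] main_check[OF vC] by simp
  have "enc_nat (Lab \<omega> n E v) \<le> (n + 2) ^ XX" using lab_le[OF vC] LL[OF vC] by simp
  then have "real (length (enc (Lab \<omega> n E v))) \<le> (2 * real XX + 2) * (log 2 (real n) + 1)"
    using v by (intro enc_len_bound) auto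
  then show ?thesis using c1 unfolding XX_def by simp
qed

theorem proposition6:
  fixes \<omega> :: int
  shows "\<exists>P V. proof_labeling_scheme (lv_treewidth_le \<omega>) P V \<and> log_size (lv_treewidth_le \<omega>) P"
proof (intro exI conjI)
  let ?P = "\<lambda>n E v. enc (Lab \<omega> n E v)"
  show "proof_labeling_scheme (lv_treewidth_le \<omega>) ?P (V \<omega>)"
    unfolding proof_labeling_scheme_def
  proof (intro conjI allI impI ballI)
    fix n E v assume h: "graph n E \<and> lv_treewidth_le \<omega> n E" and v: "v \<in> {1..n}"
    have inv: "(\<lambda>w. inv enc (enc (Lab \<omega> n E w))) = Lab \<omega> n E"
      using inv_f_f[OF inj_enc] by simp
    show "V \<omega> v (local_view E (?P n E) v)"
      unfolding V_local[OF conjunct1[OF h]] inv using complete_local[of n E \<omega> v] h v by simp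
  next
    fix n E \<phi> assume h: "graph n E \<and> \<not> lv_treewidth_le \<omega> n E"
    show "\<exists>v\<in>{1..n}. \<not> V \<omega> v (local_view E \<phi> v)"
    proof (rule ccontr)
      assume "\<not> (\<exists>v\<in>{1..n}. \<not> V \<omega> v (local_view E \<phi> v))"
      then have all: "\<forall>v\<in>{1..n}. V \<omega> v (local_view E \<phi> v)" by blast
      have "\<forall>v\<in>{1..n}. check \<omega> v {w. E v w} (\<lambda>w. inv enc (\<phi> w))"
        using all V_local[OF conjunct1[OF h]] by blast
      then have "lv_treewidth_le \<omega> n E" using soundness h by blast
      then show False using h by blast
    qed
  qed
  show "log_size (lv_treewidth_le \<omega>) ?P"
    unfolding log_size_def
    using complete_local by blast
qed


end
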